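(* There exists $\bar\eta>0$ such that for every $\eta_1\ge\bar\eta$, every solution $\phi$ of $\phi''+f(\xi,\phi,\phi')=0$ with $\phi(\eta_1)=1$ and $\phi'(\eta_1)\le0$ satisfies $\phi'(\eta_2)<-1$ for every $\eta_2>\eta_1$ (in the maximal existence interval of $\phi$) with $\phi(\eta_2)\in[0,1/2]$.
   Context: Fix $d>2$. Define $f(\eta,v,w)=\frac{d+1}{\eta}w-\frac\eta2 w+\frac1d\eta v w+v^2-v$ for $\eta>0$, $v,w\in\mathbb R$. For $(\eta_0,v_0,w_0)$ with $\eta_0>0$, $\phi(\xi;\eta_0,v_0,w_0)$ denotes the solution of $\phi''+f(\xi,\phi,\phi')=0$ (derivatives in $\xi$) with $\phi(\eta_0)=v_0$, $\phi'(\eta_0)=w_0$. *)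

theory Defs
  imports "HOL-Analysis.Analysis"
begin

definition fODE :: "real \<Rightarrow> real \<Rightarrow> real \<Rightarrow> real \<Rightarrow> real" where
  "fODE d \<eta> v w = (d + 1) / \<eta> * w - \<eta> / 2 * w + (1 / d) * \<eta> * v * w + v\<^sup>2 - v"

definition is_solution :: "real \<Rightarrow> (real \<Rightarrow> real) \<Rightarrow> (real \<Rightarrow> real) \<Rightarrow> real set \<Rightarrow> bool" where
  "is_solution d \<phi> \<psi> I \<longleftrightarrow>
     (\<forall>\<xi>\<in>I. (\<phi> has_real_derivative \<psi> \<xi>) (at \<xi> within I) \<and>
             (\<psi> has_real_derivative (- fODE d \<xi> (\<phi> \<xi>) (\<psi> \<xi>))) (at \<xi> within I))"

end

theory Submission
  imports Defs
begin

lemma h_deriv: "((\<lambda>y::real. (max y 0)^2) has_real_derivative 2 * max y 0) (at y)"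
proof (cases "y > 0")
  case True
  have "((\<lambda>y::real. y^2) has_real_derivative 2 * max y 0) (at y)"
    using True by (auto intro!: derivative_eq_intros)
  then show ?thesis
    by (rule has_field_derivative_transform_within_open[of _ _ _ "{0<..}"]) (use True in auto)
next
  case False
  show ?thesis
  proof (cases "y < 0")
    case True
    have "((\<lambda>y::real. 0) has_real_derivative 2 * max y 0) (at y)"
      using True by (auto intro!: derivative_eq_intros)
    then show ?thesis
      by (rule has_field_derivative_transform_within_open[of _ _ _ "{..<0}"]) (use True in auto)
  next
    case False2: False
    then have y0: "y = 0" using False by auto
    have "(\<lambda>h::real. ((max (0 + h) 0)^2 - (max 0 0)^2) / h) \<midarrow>0\<rightarrow> 0"
    proof (rule Lim_null_comparison[where g="\<lambda>h. \<bar>h\<bar>"])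
      show "\<forall>\<^sub>F x in at 0. norm (((max (0 + x) 0)^2 - (max 0 0)^2) / x) \<le> \<bar>x\<bar>"
        by (auto simp: power2_eq_square abs_mult max_def divide_simps)
      show "((\<lambda>h::real. \<bar>h\<bar>) \<longlongrightarrow> 0) (at 0)"
        using tendsto_rabs[OF tendsto_ident_at[of "0::real" UNIV]] by simp
    qed
    then show ?thesis using y0 by (simp add: DERIV_def)
  qed
qed

lemma gronwall0:
  fixes V V' :: "real \<Rightarrow> real"
  assumes ab: "a \<le> b"
    and dV: "\<And>t. t \<in> {a..b} \<Longrightarrow> (V has_real_derivative V' t) (at t within {a..b})"
    and le: "\<And>t. t \<in> {a..b} \<Longrightarrow> V' t \<le> C * V t"
    and nn: "\<And>t. t \<in> {a..b} \<Longrightarrow> V t \<ge> 0"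
    and V0: "V a = 0"
  shows "V b = 0"
proof -
  define W where "W t = V t * exp (- C * t)" for t
  define W' where "W' t = V' t * exp (- C * t) + V t * (exp (- C * t) * (- C))" for t
  have dW: "(W has_derivative (\<lambda>h. h * W' x)) (at x within {a..b})" if "a \<le> x" "x \<le> b" for x
  proof -
    have "(W has_real_derivative W' x) (at x within {a..b})"
      unfolding W_def W'_def using dV[of x] that
      by (auto intro!: derivative_eq_intros)
    then show ?thesis unfolding has_field_derivative_def by (simp add: mult.commute[of _ "W' x"])
  qed
  obtain x where x: "x \<in> {a..b}" "W b - W a = (b - a) * W' x"
    using mvt_very_simple[OF ab dW] by auto
  have "W' x = exp (- C * x) * (V' x - C * V x)" unfolding W'_def by (simp add: algebra_simps)
  also have "\<dots> \<le> 0" using le[OF x(1)] by (simp add: mult_nonneg_nonpos)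
  finally have "(b - a) * W' x \<le> 0" using ab by (simp add: mult_nonneg_nonpos)
  then have "W b \<le> W a" using x by simp
  then have "V b * exp (- C * b) \<le> 0" using V0 by (simp add: W_def)
  then have "V b \<le> 0" by (simp add: mult_le_0_iff)
  then show ?thesis using nn[of b] ab by auto
qed


theorem lemmaA2:
  fixes d :: real
  assumes "d > 2"
  shows "\<exists>\<eta>bar > 0. \<forall>\<eta>1 \<ge> \<eta>bar. \<forall>\<phi> \<psi> \<eta>2.
           \<eta>2 > \<eta>1 \<and> is_solution d \<phi> \<psi> {\<eta>1..\<eta>2} \<and> \<phi> \<eta>1 = 1 \<and> \<psi> \<eta>1 \<le> 0 \<and>
           0 \<le> \<phi> \<eta>2 \<and> \<phi> \<eta>2 \<le> 1/2 \<longrightarrow> \<psi> \<eta>2 < -1"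
proof -
  define c where "c = 1/2 - 1/d"
  have d0: "d > 0" using assms by simp
  have c0: "c > 0" using assms unfolding c_def by (simp add: field_simps)
  define eb where "eb = max 1 ((d+5)/c)"
  have eb0: "eb > 0" unfolding eb_def by simp
  show ?thesis
  proof (intro exI[of _ eb] conjI allI impI eb0)
    fix \<eta>1 \<phi> \<psi> \<eta>2
    assume e1: "eb \<le> \<eta>1"
    assume H: "\<eta>2 > \<eta>1 \<and> is_solution d \<phi> \<psi> {\<eta>1..\<eta>2} \<and> \<phi> \<eta>1 = 1 \<and> \<psi> \<eta>1 \<le> 0 \<and>
           0 \<le> \<phi> \<eta>2 \<and> \<phi> \<eta>2 \<le> 1/2"
    define I where "I = {\<eta>1..\<eta>2}"
    have lt: "\<eta>1 < \<eta>2" and ph1: "\<phi> \<eta>1 = 1" and ps1: "\<psi> \<eta>1 \<le> 0"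
      and ph2: "0 \<le> \<phi> \<eta>2" "\<phi> \<eta>2 \<le> 1/2" using H by auto
    have dphi: "(\<phi> has_real_derivative \<psi> \<xi>) (at \<xi> within I)"
      and dpsi: "(\<psi> has_real_derivative (- fODE d \<xi> (\<phi> \<xi>) (\<psi> \<xi>))) (at \<xi> within I)"
      if "\<xi> \<in> I" for \<xi> using H that unfolding is_solution_def I_def by auto
    have xi1: "\<xi> \<ge> 1" if "\<xi> \<in> I" for \<xi> using that e1 unfolding I_def eb_def by auto
    have xic: "\<xi> * c \<ge> d + 5" if "\<xi> \<in> I" for \<xi>
    proof -
      have "\<xi> \<ge> (d+5)/c" using that e1 unfolding I_def eb_def by auto
      then show ?thesis using c0 by (simp add: field_simps)
    qed
    define a where "a \<xi> = \<xi>/2 - \<xi> * \<phi> \<xi> / d - (d+1)/\<xi>" for \<xi>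
    have key: "- fODE d \<xi> (\<phi> \<xi>) (\<psi> \<xi>) = a \<xi> * \<psi> \<xi> + \<phi> \<xi> * (1 - \<phi> \<xi>)" for \<xi>
      unfolding fODE_def a_def by (simp add: field_simps power2_eq_square)
    have alow: "a \<xi> \<ge> 4" if "\<xi> \<in> I" "\<phi> \<xi> \<le> 1" for \<xi>
    proof -
      have x1: "\<xi> \<ge> 1" using xi1[OF that(1)] .
      have "\<xi> * \<phi> \<xi> / d \<le> \<xi> / d" using that(2) x1 d0
        by (simp add: divide_right_mono)
      moreover have "(d+1)/\<xi> \<le> d + 1" using x1 d0
        by (simp add: divide_le_eq)
      moreover have "\<xi>/2 - \<xi>/d = \<xi> * c" unfolding c_def by (simp add: field_simps)
      ultimately show ?thesis using xic[OF that(1)] unfolding a_def by linarith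
    qed
    define u where "u \<xi> = \<psi> \<xi> + 3 * (1 - \<phi> \<xi>)" for \<xi>
    define u' where "u' \<xi> = - fODE d \<xi> (\<phi> \<xi>) (\<psi> \<xi>) - 3 * \<psi> \<xi>" for \<xi>
    have du: "(u has_real_derivative u' \<xi>) (at \<xi> within I)" if "\<xi> \<in> I" for \<xi>
      unfolding u_def u'_def using dphi[OF that] dpsi[OF that]
      by (auto intro!: derivative_eq_intros)
    have u'id: "u' \<xi> = (a \<xi> - 3) * u \<xi> + (1 - \<phi> \<xi>) * (\<phi> \<xi> - 3 * (a \<xi> - 3))" for \<xi>
      unfolding u'_def u_def key by (simp add: algebra_simps)
    define V where "V \<xi> = (max (u \<xi>) 0)^2 + (max (\<phi> \<xi> - 1) 0)^2" for \<xi>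
    define V' where "V' \<xi> = 2 * max (u \<xi>) 0 * u' \<xi> + 2 * max (\<phi> \<xi> - 1) 0 * \<psi> \<xi>" for \<xi>
    have dV: "(V has_real_derivative V' \<xi>) (at \<xi> within I)" if "\<xi> \<in> I" for \<xi>
    proof -
      have 1: "((\<lambda>x. (max (u x) 0)^2) has_real_derivative 2 * max (u \<xi>) 0 * u' \<xi>) (at \<xi> within I)"
        using DERIV_chain2[OF h_deriv du[OF that]] .
      have p: "((\<lambda>x. \<phi> x - 1) has_real_derivative \<psi> \<xi>) (at \<xi> within I)"
        using dphi[OF that] by (auto intro!: derivative_eq_intros)
      have 2: "((\<lambda>x. (max (\<phi> x - 1) 0)^2) has_real_derivative 2 * max (\<phi> \<xi> - 1) 0 * \<psi> \<xi>) (at \<xi> within I)"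
        using DERIV_chain2[OF h_deriv p] .
      show ?thesis unfolding V_def V'_def using DERIV_add[OF 1 2] by simp
    qed
    define G where "G \<xi> = \<bar>a \<xi> - 3\<bar> + \<bar>3 * (a \<xi> - 3) - \<phi> \<xi>\<bar>" for \<xi>
    have cphi: "continuous_on I \<phi>" using dphi by (rule DERIV_continuous_on)
    have cG: "continuous_on I G"
      unfolding G_def a_def using cphi xi1 d0
      by (intro continuous_intros) (auto dest: xi1)
    obtain x0 where "x0 \<in> I" and x0: "\<forall>y\<in>I. G y \<le> G x0"
      using continuous_attains_sup[OF _ _ cG] lt unfolding I_def by auto
    define L where "L = G x0"
    have L0: "L \<ge> 0" unfolding L_def G_def by simp
    have GL: "\<bar>a \<xi> - 3\<bar> \<le> L" "\<bar>3 * (a \<xi> - 3) - \<phi> \<xi>\<bar> \<le> L" if "\<xi> \<in> I" for \<xi>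
      using x0 that unfolding L_def G_def by (fastforce)+
    define C where "C = 3 * L + 8"
    have V'le: "V' \<xi> \<le> C * V \<xi>" if "\<xi> \<in> I" for \<xi>
    proof -
      define p where "p = max (u \<xi>) 0"
      define q where "q = max (\<phi> \<xi> - 1) 0"
      have p0: "p \<ge> 0" and q0: "q \<ge> 0" unfolding p_def q_def by auto
      have A: "p * u' \<xi> \<le> L * p^2 + L * p * q"
      proof (cases "u \<xi> \<le> 0")
        case True
        then have "p = 0" unfolding p_def by simp
        then show ?thesis by simp
      next
        case False
        then have pu: "p = u \<xi>" unfolding p_def by simp
        have e: "p * u' \<xi> = (a \<xi> - 3) * p^2 + p * ((1 - \<phi> \<xi>) * (\<phi> \<xi> - 3 * (a \<xi> - 3)))"
          unfolding u'id pu by (simp add: algebra_simps power2_eq_square)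
        have t1: "(a \<xi> - 3) * p^2 \<le> L * p^2"
          using GL(1)[OF that] by (intro mult_right_mono) auto
        show ?thesis
        proof (cases "\<phi> \<xi> \<le> 1")
          case True
          have "a \<xi> \<ge> 4" using alow[OF that True] .
          then have "(1 - \<phi> \<xi>) * (\<phi> \<xi> - 3 * (a \<xi> - 3)) \<le> 0"
            using True by (intro mult_nonneg_nonpos) auto
          then have "p * ((1 - \<phi> \<xi>) * (\<phi> \<xi> - 3 * (a \<xi> - 3))) \<le> 0"
            using p0 by (simp add: mult_nonneg_nonpos)
          moreover have "L * p * q \<ge> 0" using L0 p0 q0 by simp
          ultimately show ?thesis using e t1 by linarith
        next
          case False
          then have qe: "q = \<phi> \<xi> - 1" unfolding q_def by simp
          have "p * ((1 - \<phi> \<xi>) * (\<phi> \<xi> - 3 * (a \<xi> - 3))) = (p * q) * (3 * (a \<xi> - 3) - \<phi> \<xi>)"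
            unfolding qe by (simp add: algebra_simps)
          also have "\<dots> \<le> (p * q) * L"
            using GL(2)[OF that] p0 q0 by (intro mult_left_mono) auto
          finally show ?thesis using e t1 by (simp add: algebra_simps)
        qed
      qed
      have B: "q * \<psi> \<xi> \<le> q * p + 3 * q^2"
      proof (cases "\<phi> \<xi> \<le> 1")
        case True
        then have "q = 0" unfolding q_def by simp
        then show ?thesis by simp
      next
        case False
        then have qe: "q = \<phi> \<xi> - 1" unfolding q_def by simp
        have "\<psi> \<xi> = u \<xi> + 3 * q" unfolding u_def qe by simp
        moreover have "u \<xi> \<le> p" unfolding p_def by simp
        ultimately have "\<psi> \<xi> \<le> p + 3 * q" by simp
        then have "q * \<psi> \<xi> \<le> q * (p + 3 * q)" using q0 by (intro mult_left_mono) auto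
        then show ?thesis by (simp add: algebra_simps power2_eq_square)
      qed
      have "2 * (p * q) \<le> p^2 + q^2"
        using sum_squares_ge_zero[of "p - q" 0] by (simp add: power2_eq_square algebra_simps)
      then have "(L + 1) * (2 * (p * q)) \<le> (L + 1) * (p^2 + q^2)"
        using L0 by (intro mult_left_mono) auto
      then have "2 * (L + 1) * (p * q) \<le> (L + 1) * (p^2 + q^2)" by (simp add: algebra_simps)
      then have "V' \<xi> \<le> (3 * L + 1) * p^2 + (L + 7) * q^2"
        using A B unfolding V'_def p_def[symmetric] q_def[symmetric]
        by (simp add: algebra_simps power2_eq_square)
      also have "\<dots> \<le> C * V \<xi>"
        unfolding V_def p_def[symmetric] q_def[symmetric] C_def
        using L0 by (simp add: algebra_simps power2_eq_square mult_right_mono)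
      finally show ?thesis .
    qed
    have V0: "V \<eta>1 = 0" unfolding V_def u_def using ph1 ps1 by simp
    have Vnn: "V \<xi> \<ge> 0" for \<xi> unfolding V_def by simp
    have "V \<eta>2 = 0"
      using gronwall0[of \<eta>1 \<eta>2 V V' C] lt dV V'le Vnn V0 unfolding I_def by auto
    then have "max (u \<eta>2) 0 = 0" unfolding V_def
      by (metis add_nonneg_eq_0_iff power_eq_0_iff zero_le_power2)
    then have "u \<eta>2 \<le> 0" by simp
    then show "\<psi> \<eta>2 < -1" using ph2 unfolding u_def by simp
  qed
qed

end
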